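(* Let $\mathcal{A}$ be a virtual orbifold atlas on a compact metrizable space $X$, indexed by a finite poset $\mathcal{I}$, for which the relation $\curlyvee$ is an equivalence relation. Order $\mathcal{I}$ as $\{I_1,\dots,I_m\}$ such that for each $k$, $I_k\preccurlyeq J$ implies $J\in\{I_k,I_{k+1},\dots,I_m\}$. For each $k$ let $|\mathcal{A}_k|$ be the quotient of $\bigsqcup_{i\ge k}U_{I_i}$ by the equivalence relation induced by $\curlyvee$, with the quotient topology. Then for each $k<m$ the natural map $|\mathcal{A}_{k+1}|\to|\mathcal{A}_k|$ is a homeomorphism onto an open subset.
   Context: A topological orbifold (possibly non-effective) and an orbifold vector bundle are defined via charts $(\tilde U,\Gamma,\varphi)$ with $\tilde U$ a topological manifold and $\Gamma$ a finite group acting continuously. A virtual orbifold chart on $X$ is $C=(U,E,S,\psi,F)$: $U$ an orbifold, $E\to U$ an orbifold vector bundle, $S$ a continuous section, $F\subset X$ open, $\psi:S^{-1}(0)\to F$ a homeomorphism. A coordinate change from $C_I$ to $C_J$ is $T_{JI}=(U_{JI},\phi_{JI},\widehat\phi_{JI})$: $U_{JI}\subset U_I$ open, $\phi_{JI}:U_{JI}\to U_J$ an orbifold embedding (continuous, homeomorphism onto its image, locally an equivariant locally flat embedding) covered by a fibrewise injective linear bundle embedding $\widehat\phi_{JI}$, intertwining sections and the maps $\psi$, with footprint $F_I\cap F_J$, satisfying a tangent bundle condition and the closedness condition (if $x_k\in U_{JI}\to x_\infty\in U_I$ and $\phi_{JI}(x_k)\to y_\infty$ then $x_\infty\in U_{JI}$,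 $y_\infty=\phi_{JI}(x_\infty)$). A virtual orbifold atlas: finite poset $(\mathcal{I},\preccurlyeq)$, charts $C_I$, coordinate changes $T_{JI}$ for $I\preccurlyeq J$, footprints covering $X$, cocycle condition $\widehat\phi_{KI}=\widehat\phi_{KJ}\circ\widehat\phi_{JI}$ on $U_{KI}\cap\phi_{JI}^{-1}(U_{KJ})$, and overlapping condition ($\overline{F_I}\cap\overline{F_J}\ne\emptyset\Rightarrow I\preccurlyeq J$ or $J\preccurlyeq I$). The relation $\curlyvee$ on $\bigsqcup_IU_I$: $x\in U_I$, $y\in U_J$ satisfy $x\curlyvee y$ iff ($I=J$, $x=y$) or ($I\preccurlyeq J$, $x\in U_{JI}$, $y=\phi_{JI}(x)$) or ($J\preccurlyeq I$, $y\in U_{IJ}$, $x=\phi_{IJ}(y)$). *)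

theory Defs
  imports "HOL-Analysis.Analysis"
begin

definition quotient_topology :: "'a topology \<Rightarrow> ('a \<times> 'a) set \<Rightarrow> 'a set topology" where
  "quotient_topology X R = topology (\<lambda>U. U \<subseteq> topspace X // R \<and> openin X (\<Union>U))"

text \<open>Topological data of a virtual orbifold chart C_I = (U_I, E_I, S_I, psi_I, F_I):
the (underlying space of the) orbifold U I, the zero set Z I = S_I^{-1}(0) (closed),
the homeomorphism psi I : Z I -> F I onto an open footprint F I of X.\<close>

definition virtual_chart_top ::
  "'x topology \<Rightarrow> 'a topology \<Rightarrow> 'a set \<Rightarrow> ('a \<Rightarrow> 'x) \<Rightarrow> 'x set \<Rightarrow> bool" where
  "virtual_chart_top X U Z psi F \<longleftrightarrow>
     Hausdorff_space U \<and> closedin U Z \<and> openin X F \<and>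
     homeomorphic_map (subtopology U Z) (subtopology X F) psi"

text \<open>Topological data of a coordinate change T_JI = (U_JI, phi_JI, hat phi_JI) from C_I
to C_J: U_JI open in U_I, phi_JI a topological embedding, intertwining the zero sets
(S_J o phi = hat phi o S_I with hat phi fibrewise injective, so phi^{-1}(Z_J) = U_JI \<inter> Z_I)
and the maps psi, footprint F_I \<inter> F_J, and the closedness condition.\<close>

definition coord_change_top ::
  "'a topology \<Rightarrow> 'a set \<Rightarrow> ('a \<Rightarrow> 'x) \<Rightarrow> 'x set \<Rightarrow>
   'a topology \<Rightarrow> 'a set \<Rightarrow> ('a \<Rightarrow> 'x) \<Rightarrow> 'x set \<Rightarrow>
   'a set \<Rightarrow> ('a \<Rightarrow> 'a) \<Rightarrow> bool" where
  "coord_change_top UI ZI psiI FI UJ ZJ psiJ FJ UJI phi \<longleftrightarrow>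
     openin UI UJI \<and>
     embedding_map (subtopology UI UJI) UJ phi \<and>
     (\<forall>x\<in>UJI. phi x \<in> ZJ \<longleftrightarrow> x \<in> ZI) \<and>
     (\<forall>x\<in>UJI \<inter> ZI. psiJ (phi x) = psiI x) \<and>
     psiI ` (UJI \<inter> ZI) = FI \<inter> FJ \<and>
     (\<forall>xs x y. (\<forall>n. xs n \<in> UJI) \<longrightarrow> limitin UI xs x sequentially \<longrightarrow>
        limitin UJ (phi \<circ> xs) y sequentially \<longrightarrow> x \<in> UJI \<and> y = phi x)"

text \<open>Topological data of a virtual orbifold atlas indexed by the finite poset (Iset, le).
UU J I stands for U_JI and phi J I for phi_JI.\<close>

definition virtual_atlas_top ::
  "'x topology \<Rightarrow> 'i set \<Rightarrow> ('i \<Rightarrow> 'i \<Rightarrow> bool) \<Rightarrow> ('i \<Rightarrow> 'a topology) \<Rightarrow> ('i \<Rightarrow> 'a set) \<Rightarrow>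
   ('i \<Rightarrow> 'a \<Rightarrow> 'x) \<Rightarrow> ('i \<Rightarrow> 'x set) \<Rightarrow> ('i \<Rightarrow> 'i \<Rightarrow> 'a set) \<Rightarrow> ('i \<Rightarrow> 'i \<Rightarrow> 'a \<Rightarrow> 'a) \<Rightarrow> bool" where
  "virtual_atlas_top X Iset le U Z psi F UU phi \<longleftrightarrow>
     finite Iset \<and>
     (\<forall>I\<in>Iset. le I I) \<and>
     (\<forall>I\<in>Iset. \<forall>J\<in>Iset. le I J \<and> le J I \<longrightarrow> I = J) \<and>
     (\<forall>I\<in>Iset. \<forall>J\<in>Iset. \<forall>K\<in>Iset. le I J \<and> le J K \<longrightarrow> le I K) \<and>
     (\<forall>I\<in>Iset. virtual_chart_top X (U I) (Z I) (psi I) (F I)) \<and>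
     (\<forall>I\<in>Iset. \<forall>J\<in>Iset. le I J \<longrightarrow>
        coord_change_top (U I) (Z I) (psi I) (F I) (U J) (Z J) (psi J) (F J) (UU J I) (phi J I)) \<and>
     (\<Union>I\<in>Iset. F I) = topspace X \<and>
     (\<forall>I\<in>Iset. \<forall>J\<in>Iset. \<forall>K\<in>Iset. le I J \<and> le J K \<longrightarrow>
        (\<forall>x\<in>UU K I \<inter> {x\<in>UU J I. phi J I x \<in> UU K J}. phi K I x = phi K J (phi J I x))) \<and>
     (\<forall>I\<in>Iset. \<forall>J\<in>Iset. X closure_of F I \<inter> X closure_of F J \<noteq> {} \<longrightarrow> le I J \<or> le J I)"

definition vee_rel ::
  "'i set \<Rightarrow> ('i \<Rightarrow> 'i \<Rightarrow> bool) \<Rightarrow> ('i \<Rightarrow> 'a topology) \<Rightarrow> ('i \<Rightarrow> 'i \<Rightarrow> 'a set) \<Rightarrow>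
   ('i \<Rightarrow> 'i \<Rightarrow> 'a \<Rightarrow> 'a) \<Rightarrow> (('i \<times> 'a) \<times> ('i \<times> 'a)) set" where
  "vee_rel Iset le U UU phi =
     {((I, x), (J, y)) | I x J y. I \<in> Iset \<and> J \<in> Iset \<and> x \<in> topspace (U I) \<and> y \<in> topspace (U J) \<and>
        ((I = J \<and> x = y) \<or> (le I J \<and> x \<in> UU J I \<and> y = phi J I x) \<or>
         (le J I \<and> y \<in> UU I J \<and> x = phi I J y))}"

text \<open>|A_k| for the ordering Is = [I_1,...,I_m] (0-based: k-th tail drop k Is):
quotient of the disjoint union of the U_I, I in drop k Is, by the restriction of curlyvee.\<close>

definition tail_quotient ::
  "'i list \<Rightarrow> nat \<Rightarrow> ('i \<Rightarrow> 'a topology) \<Rightarrow> (('i \<times> 'a) \<times> ('i \<times> 'a)) set \<Rightarrow> ('i \<times> 'a) set topology" where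
  "tail_quotient Is k U R =
     (let S = sum_topology U (set (drop k Is))
      in quotient_topology S (R \<inter> (topspace S \<times> topspace S)))"

definition tail_natural_map ::
  "'i list \<Rightarrow> nat \<Rightarrow> ('i \<Rightarrow> 'a topology) \<Rightarrow> (('i \<times> 'a) \<times> ('i \<times> 'a)) set \<Rightarrow> ('i \<times> 'a) set \<Rightarrow> ('i \<times> 'a) set" where
  "tail_natural_map Is k U R c =
     (let S = sum_topology U (set (drop k Is)) in (R \<inter> (topspace S \<times> topspace S)) `` c)"

end

theory Submission
  imports Defs
begin

lemma istop_quot:
  assumes "equiv (topspace X) R"
  shows "istopology (\<lambda>U. U \<subseteq> topspace X // R \<and> openin X (\<Union>U))"
proof -
 have 1: "S \<inter> T \<subseteq> topspace X // R \<and> openin X (\<Union>(S \<inter> T))" if S: "S \<subseteq> topspace X // R \<and> openin X (\<Union>S)"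
    and T: "T \<subseteq> topspace X // R \<and> openin X (\<Union>T)" for S T
 proof -
  have eqST: "\<Union>(S \<inter> T) = \<Union>S \<inter> \<Union>T"
  proof
    show "\<Union>S \<inter> \<Union>T \<subseteq> \<Union>(S \<inter> T)"
    proof
      fix x assume "x \<in> \<Union>S \<inter> \<Union>T"
      then obtain A B where AB: "A \<in> S" "B \<in> T" "x \<in> A" "x \<in> B" by blast
      then have "A = B \<or> A \<inter> B = {}" using S T quotient_disj[OF assms] by blast
      then show "x \<in> \<Union>(S \<inter> T)" using AB by blast
    qed
  qed blast
  show "S \<inter> T \<subseteq> topspace X // R \<and> openin X (\<Union>(S \<inter> T))"
  proof (intro conjI)
    show "S \<inter> T \<subseteq> topspace X // R" using S by blast
    show "openin X (\<Union>(S \<inter> T))" unfolding eqST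
      using S T by (intro openin_Int) auto
  qed
 qed
 have 2: "\<Union>K \<subseteq> topspace X // R \<and> openin X (\<Union>(\<Union>K))" if "\<forall>S\<in>K. S \<subseteq> topspace X // R \<and> openin X (\<Union>S)" for K
  proof -
    have "\<Union>(\<Union>K) = (\<Union>S\<in>K. \<Union>S)" by blast
    moreover have "openin X (\<Union>S\<in>K. \<Union>S)" using that by (intro openin_Union) auto
    ultimately show ?thesis using that by auto
  qed
 show ?thesis unfolding istopology_def using 1 2 by blast
qed

lemma openin_quot:
  assumes "equiv (topspace X) R"
  shows "openin (quotient_topology X R) W \<longleftrightarrow> W \<subseteq> topspace X // R \<and> openin X (\<Union>W)"
  unfolding quotient_topology_def using topology_inverse'[OF istop_quot[OF assms]] by simp

lemma topspace_quot:
  assumes "equiv (topspace X) R"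
  shows "topspace (quotient_topology X R) = topspace X // R"
proof -
  have "openin (quotient_topology X R) (topspace X // R)"
    using openin_quot[OF assms] Union_quotient[OF assms] by auto
  then have "topspace X // R \<subseteq> topspace (quotient_topology X R)" by (rule openin_subset)
  moreover have "topspace (quotient_topology X R) \<subseteq> topspace X // R"
    using openin_quot[OF assms] openin_topspace by blast
  ultimately show ?thesis by blast
qed

lemma equiv_restr:
  assumes "equiv T0 R" "A \<subseteq> T0"
  shows "equiv A (R \<inter> (A \<times> A))"
  using assms unfolding equiv_def refl_on_def sym_def trans_def by blast

lemma core:
  fixes U :: "'i \<Rightarrow> 'a topology" and R :: "(('i \<times> 'a) \<times> ('i \<times> 'a)) set"
  assumes eq: "equiv T0 R" and sub: "Sigma K (topspace \<circ> U) \<subseteq> T0" and K: "K = insert Io Ka"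
   and H: "\<And>A. openin (sum_topology U Ka) A \<Longrightarrow>
             openin (U Io) {x \<in> topspace (U Io). \<exists>a\<in>A. (a,(Io,x)) \<in> R}"
   and Sk_def: "Sk = sum_topology U K" and S1_def: "S1 = sum_topology U Ka"
   and Rk_def: "Rk = R \<inter> (topspace Sk \<times> topspace Sk)" and R1_def: "R1 = R \<inter> (topspace S1 \<times> topspace S1)"
   and f_def: "f = (\<lambda>c. Rk `` c)"
  shows "openin (quotient_topology Sk Rk) (f ` topspace (quotient_topology S1 R1))
     \<and> embedding_map (quotient_topology S1 R1) (quotient_topology Sk Rk) f"
proof -
  have T1: "topspace S1 \<subseteq> topspace Sk" unfolding S1_def Sk_def K by auto
  have eqk: "equiv (topspace Sk) Rk" unfolding Rk_def
    by (rule equiv_restr[OF eq]) (use sub Sk_def in auto)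
  have eq1: "equiv (topspace S1) R1" unfolding R1_def
    by (rule equiv_restr[OF eq]) (use sub T1 Sk_def in auto)
  have R1k: "R1 \<subseteq> Rk" using T1 unfolding R1_def Rk_def by auto
  have R1_iff: "(p,q) \<in> Rk \<longleftrightarrow> (p,q) \<in> R1" if "p \<in> topspace S1" "q \<in> topspace S1" for p q
    using that T1 unfolding R1_def Rk_def by auto
  have trk: "(a,c) \<in> Rk" if "(a,b) \<in> Rk" "(b,c) \<in> Rk" for a b c
    using eqk that unfolding equiv_def trans_def by blast
  have fclass: "f (R1``{p}) = Rk``{p}" if p: "p \<in> topspace S1" for p
  proof
    show "f (R1 `` {p}) \<subseteq> Rk `` {p}" unfolding f_def using R1k trk by blast
    show "Rk `` {p} \<subseteq> f (R1 `` {p})" unfolding f_def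
      using equiv_class_self[OF eq1 p] by blast
  qed
  have TQ1: "topspace (quotient_topology S1 R1) = topspace S1 // R1" by (rule topspace_quot[OF eq1])
  have TQk: "topspace (quotient_topology Sk Rk) = topspace Sk // Rk" by (rule topspace_quot[OF eqk])
  have fmaps: "f c \<in> topspace Sk // Rk" if "c \<in> topspace S1 // R1" for c
    using that by (metis fclass quotientE quotientI T1 subsetD)
  have inj: "inj_on f (topspace S1 // R1)"
  proof (rule inj_onI)
    fix c d assume c: "c \<in> topspace S1 // R1" and d: "d \<in> topspace S1 // R1" and fcd: "f c = f d"
    obtain p where p: "c = R1``{p}" "p \<in> topspace S1" using c by (rule quotientE)
    obtain q where q: "d = R1``{q}" "q \<in> topspace S1" using d by (rule quotientE)
    have "Rk``{p} = Rk``{q}" using fcd p q fclass by simp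
    then have "(p,q) \<in> Rk" using eq_equiv_class[OF _ eqk] q T1 by blast
    then have "(p,q) \<in> R1" using R1_iff p q by blast
    then show "c = d" using p q equiv_class_eq[OF eq1] by simp
  qed
  have cont: "continuous_map (quotient_topology S1 R1) (quotient_topology Sk Rk) f"
    unfolding continuous_map_def
  proof (intro conjI Pi_I ballI allI impI)
    fix c assume "c \<in> topspace (quotient_topology S1 R1)"
    then show "f c \<in> topspace (quotient_topology Sk Rk)" using fmaps TQ1 TQk by simp
  next
    fix V assume "openin (quotient_topology Sk Rk) V"
    then have V: "V \<subseteq> topspace Sk // Rk" "openin Sk (\<Union>V)" using openin_quot[OF eqk] by auto
    let ?P = "{c \<in> topspace (quotient_topology S1 R1). f c \<in> V}"
    have UP: "\<Union>?P = \<Union>V \<inter> topspace S1"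
    proof
      show "\<Union>?P \<subseteq> \<Union>V \<inter> topspace S1"
      proof
        fix q assume "q \<in> \<Union>?P"
        then obtain c where c: "c \<in> topspace S1 // R1" "f c \<in> V" "q \<in> c" using TQ1 by auto
        obtain p where p: "c = R1``{p}" "p \<in> topspace S1" using c(1) by (rule quotientE)
        have "(p,q) \<in> R1" using c(3) p by simp
        then have "q \<in> topspace S1" "q \<in> Rk``{p}" using R1k unfolding R1_def by auto
        then show "q \<in> \<Union>V \<inter> topspace S1" using c(2) fclass[OF p(2)] p(1) by auto
      qed
      show "\<Union>V \<inter> topspace S1 \<subseteq> \<Union>?P"
      proof
        fix q assume "q \<in> \<Union>V \<inter> topspace S1"
        then obtain D where D: "D \<in> V" "q \<in> D" "q \<in> topspace S1" by auto
        obtain r where r: "D = Rk``{r}" "r \<in> topspace Sk" using D(1) V(1) by (blast elim: quotientE)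
        have "Rk``{r} = Rk``{q}" using equiv_class_eq[OF eqk] D(2) r(1) by simp
        then have "f (R1``{q}) \<in> V" using fclass[OF D(3)] D(1) r(1) by simp
        moreover have "R1``{q} \<in> topspace S1 // R1" using D(3) by (rule quotientI)
        moreover have "q \<in> R1``{q}" using equiv_class_self[OF eq1 D(3)] .
        ultimately show "q \<in> \<Union>?P" using TQ1 by blast
      qed
    qed
    have "openin S1 (\<Union>V \<inter> topspace S1)"
    proof -
      have B: "\<Union>V \<subseteq> Sigma K (topspace \<circ> U)" "\<forall>i\<in>K. openin (U i) {x. (i,x) \<in> \<Union>V}"
        using V(2) unfolding Sk_def openin_sum_topology by auto
      have "{x. (i,x) \<in> \<Union>V \<inter> topspace S1} = {x. (i,x) \<in> \<Union>V}" if "i \<in> Ka" for i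
        using B(1) that unfolding S1_def by auto
      then show ?thesis unfolding S1_def openin_sum_topology using B K by auto
    qed
    moreover have "?P \<subseteq> topspace S1 // R1" using TQ1 by auto
    ultimately show "openin (quotient_topology S1 R1) ?P"
      using openin_quot[OF eq1] UP by simp
  qed
  have openm: "open_map (quotient_topology S1 R1) (quotient_topology Sk Rk) f"
    unfolding open_map_def
  proof (intro allI impI)
    fix W assume "openin (quotient_topology S1 R1) W"
    then have W: "W \<subseteq> topspace S1 // R1" "openin S1 (\<Union>W)" using openin_quot[OF eq1] by auto
    define A where "A = \<Union>W"
    have AS: "A \<subseteq> topspace S1" using W(1) Union_quotient[OF eq1] A_def by blast
    have sat: "q \<in> A" if aq: "a \<in> A" "(a,q) \<in> R1" for a q
    proof -
      obtain c where c: "c \<in> W" "a \<in> c" using aq A_def by auto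
      obtain p where p: "c = R1``{p}" "p \<in> topspace S1" using c(1) W(1) by (blast elim: quotientE)
      have "(p,q) \<in> R1" using eq1 c(2) p(1) aq(2) unfolding equiv_def trans_def by blast
      then show ?thesis using c p A_def by auto
    qed
    have UfW: "\<Union>(f ` W) = Rk `` A" unfolding f_def A_def by blast
    have fW: "f ` W \<subseteq> topspace Sk // Rk" using fmaps W(1) by blast
    have AO: "A \<subseteq> Sigma Ka (topspace \<circ> U)" "\<forall>i\<in>Ka. openin (U i) {x. (i,x) \<in> A}"
      using W(2) unfolding A_def S1_def openin_sum_topology by auto
    have "openin Sk (Rk `` A)"
      unfolding Sk_def openin_sum_topology
    proof (intro conjI ballI)
      show "Rk `` A \<subseteq> Sigma K (topspace \<circ> U)" unfolding Rk_def Sk_def by auto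
    next
      fix i assume i: "i \<in> K"
      show "openin (U i) {x. (i, x) \<in> Rk `` A}"
      proof (cases "i \<in> Ka")
        case True
        have "{x. (i, x) \<in> Rk `` A} = {x. (i,x) \<in> A}"
        proof
          show "{x. (i, x) \<in> Rk `` A} \<subseteq> {x. (i, x) \<in> A}"
          proof
            fix x assume "x \<in> {x. (i, x) \<in> Rk `` A}"
            then obtain a where a: "a \<in> A" "(a,(i,x)) \<in> Rk" by auto
            have "(i,x) \<in> topspace S1" using a(2) True unfolding Rk_def Sk_def S1_def by auto
            then have "(a,(i,x)) \<in> R1" using R1_iff a AS by blast
            then show "x \<in> {x. (i, x) \<in> A}" using sat a by auto
          qed
          show "{x. (i, x) \<in> A} \<subseteq> {x. (i, x) \<in> Rk `` A}"
            using AS T1 equiv_class_self[OF eqk] by blast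
        qed
        then show ?thesis using AO True by simp
      next
        case False
        then have iIo: "i = Io" using i K by auto
        have "{x. (i, x) \<in> Rk `` A} = {x \<in> topspace (U Io). \<exists>a\<in>A. (a,(Io,x)) \<in> R}"
        proof
          show "{x. (i, x) \<in> Rk `` A} \<subseteq> {x \<in> topspace (U Io). \<exists>a\<in>A. (a,(Io,x)) \<in> R}"
            using iIo unfolding Rk_def Sk_def by auto
          show "{x \<in> topspace (U Io). \<exists>a\<in>A. (a,(Io,x)) \<in> R} \<subseteq> {x. (i, x) \<in> Rk `` A}"
          proof
            fix x assume "x \<in> {x \<in> topspace (U Io). \<exists>a\<in>A. (a,(Io,x)) \<in> R}"
            then obtain a where a: "x \<in> topspace (U Io)" "a \<in> A" "(a,(Io,x)) \<in> R" by auto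
            have "a \<in> topspace Sk" using a(2) AS T1 by blast
            moreover have "(Io,x) \<in> topspace Sk" using a(1) unfolding Sk_def K by auto
            ultimately have "(a,(Io,x)) \<in> Rk" using a(3) unfolding Rk_def by blast
            then show "x \<in> {x. (i, x) \<in> Rk `` A}" using a(2) iIo by blast
          qed
        qed
        moreover have "openin (sum_topology U Ka) A" using W(2) A_def S1_def by simp
        ultimately show ?thesis using H iIo by simp
      qed
    qed
    then show "openin (quotient_topology Sk Rk) (f ` W)"
      using openin_quot[OF eqk] UfW fW by simp
  qed
  have emb: "embedding_map (quotient_topology S1 R1) (quotient_topology Sk Rk) f"
    using injective_open_imp_embedding_map[OF cont openm] inj TQ1 by simp
  moreover have "openin (quotient_topology Sk Rk) (f ` topspace (quotient_topology S1 R1))"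
    using openm unfolding open_map_def by blast
  ultimately show ?thesis by blast
qed

lemma emb_cont: "embedding_map X Y f \<Longrightarrow> continuous_map X Y f"
  by (meson embedding_map_def homeomorphic_imp_continuous_map continuous_map_in_subtopology)

theorem lemma7p33:
  fixes X :: "'x topology" and Iset :: "'i set" and le :: "'i \<Rightarrow> 'i \<Rightarrow> bool"
    and U :: "'i \<Rightarrow> 'a topology" and Z :: "'i \<Rightarrow> 'a set" and psi :: "'i \<Rightarrow> 'a \<Rightarrow> 'x"
    and F :: "'i \<Rightarrow> 'x set" and UU :: "'i \<Rightarrow> 'i \<Rightarrow> 'a set" and phi :: "'i \<Rightarrow> 'i \<Rightarrow> 'a \<Rightarrow> 'a"
    and Is :: "'i list" and k :: nat
  assumes "compact_space X" and "metrizable_space X"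
    and "virtual_atlas_top X Iset le U Z psi F UU phi"
    and "equiv (Sigma Iset (topspace \<circ> U)) (vee_rel Iset le U UU phi)"
    and "distinct Is" and "set Is = Iset"
    and "\<forall>j < length Is. \<forall>J\<in>Iset. le (Is ! j) J \<longrightarrow> J \<in> set (drop j Is)"
    and "k + 1 < length Is"
  shows "openin (tail_quotient Is k U (vee_rel Iset le U UU phi))
           (tail_natural_map Is k U (vee_rel Iset le U UU phi) `
              topspace (tail_quotient Is (k + 1) U (vee_rel Iset le U UU phi)))
       \<and> embedding_map (tail_quotient Is (k + 1) U (vee_rel Iset le U UU phi))
           (tail_quotient Is k U (vee_rel Iset le U UU phi))
           (tail_natural_map Is k U (vee_rel Iset le U UU phi))"
proof -
  let ?R = "vee_rel Iset le U UU phi"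
  have CC: "\<forall>I\<in>Iset. \<forall>J\<in>Iset. le I J \<longrightarrow>
        coord_change_top (U I) (Z I) (psi I) (F I) (U J) (Z J) (psi J) (F J) (UU J I) (phi J I)"
    using assms(3) unfolding virtual_atlas_top_def by (elim conjE) assumption
  have kl: "k < length Is" using assms(8) by simp
  define I0 where "I0 = Is ! k"
  have dropk: "drop k Is = I0 # drop (Suc k) Is" unfolding I0_def by (rule Cons_nth_drop_Suc[OF kl, symmetric])
  have I0Iset: "I0 \<in> Iset" using kl assms(6) I0_def by auto
  have I0notin: "I0 \<notin> set (drop (Suc k) Is)"
    using assms(5) dropk by (metis distinct.simps(2) distinct_drop)
  have K1Iset: "set (drop (Suc k) Is) \<subseteq> Iset" using assms(6) by (metis set_drop_subset)
  have minimal: False if J: "J \<in> set (drop (Suc k) Is)" "le J I0" for J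
  proof -
    obtain j where j: "j < length (drop (Suc k) Is)" "drop (Suc k) Is ! j = J" using J(1) by (metis in_set_conv_nth)
    let ?j = "Suc k + j"
    have jl: "?j < length Is" using j by simp
    have Jj: "Is ! ?j = J" using j by simp
    have "J \<in> Iset" using J K1Iset by blast
    then have "I0 \<in> set (drop ?j Is)" using assms(7) jl Jj J(2) I0Iset by blast
    then obtain i where i: "i < length (drop ?j Is)" "drop ?j Is ! i = I0" by (metis in_set_conv_nth)
    have l2: "?j + i < length Is" using i by simp
    have "Is ! (?j + i) = Is ! k" using i unfolding I0_def by simp
    then have "?j + i = k" using nth_eq_iff_index_eq[OF assms(5) l2 kl] by blast
    then show False by simp
  qed
  have symR: "(q,p) \<in> ?R" if "(p,q) \<in> ?R" for p q
    using assms(4) that unfolding equiv_def sym_def by blast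
  have H: "openin (U I0) {x \<in> topspace (U I0). \<exists>a\<in>A. (a,(I0,x)) \<in> ?R}"
    if A: "openin (sum_topology U (set (drop (Suc k) Is))) A" for A
  proof -
    let ?K1 = "set (drop (Suc k) Is)"
    have AO: "A \<subseteq> Sigma ?K1 (topspace \<circ> U)" "\<forall>i\<in>?K1. openin (U i) {x. (i,x) \<in> A}"
      using A unfolding openin_sum_topology by auto
    have eqs: "{x \<in> topspace (U I0). \<exists>a\<in>A. (a,(I0,x)) \<in> ?R}
      = (\<Union>J\<in>{J\<in>?K1. le I0 J}. {x \<in> topspace (subtopology (U I0) (UU J I0)). phi J I0 x \<in> {y. (J,y) \<in> A}})"
      (is "?L = ?RR")
    proof
      show "?L \<subseteq> ?RR"
      proof
        fix x assume "x \<in> ?L"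
        then obtain a where a: "x \<in> topspace (U I0)" "a \<in> A" "(a,(I0,x)) \<in> ?R" by auto
        obtain J y where Jy: "a = (J,y)" by (cases a)
        have J: "J \<in> ?K1" using AO(1) a(2) Jy by auto
        have JI: "J \<noteq> I0" using J I0notin by auto
        have "((I0,x),(J,y)) \<in> ?R" using symR a(3) Jy by simp
        then have "(le I0 J \<and> x \<in> UU J I0 \<and> y = phi J I0 x) \<or> (le J I0 \<and> y \<in> UU I0 J \<and> x = phi I0 J y)"
          using JI unfolding vee_rel_def by auto
        then have c: "le I0 J" "x \<in> UU J I0" "y = phi J I0 x" using minimal J by auto
        show "x \<in> ?RR" using c J a Jy by auto
      qed
      show "?RR \<subseteq> ?L"
      proof
        fix x assume "x \<in> ?RR"
        then obtain J where J: "J \<in> ?K1" "le I0 J" "x \<in> UU J I0" "(J, phi J I0 x) \<in> A" by auto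
        have JIset: "J \<in> Iset" using J K1Iset by blast
        have cc: "coord_change_top (U I0) (Z I0) (psi I0) (F I0) (U J) (Z J) (psi J) (F J) (UU J I0) (phi J I0)"
          using CC I0Iset JIset J(2) by blast
        have "openin (U I0) (UU J I0)" using cc unfolding coord_change_top_def by (elim conjE)
        then have x: "x \<in> topspace (U I0)" using J(3) openin_subset by blast
        have "phi J I0 x \<in> topspace (U J)" using AO(1) J(4) by auto
        then have "((I0,x),(J, phi J I0 x)) \<in> ?R" using x J I0Iset JIset unfolding vee_rel_def by auto
        then show "x \<in> ?L" using symR x J(4) by blast
      qed
    qed
    have "openin (U I0) {x \<in> topspace (subtopology (U I0) (UU J I0)). phi J I0 x \<in> {y. (J,y) \<in> A}}"
      if J: "J \<in> ?K1" "le I0 J" for J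
    proof -
      have JIset: "J \<in> Iset" using J K1Iset by blast
      have cc: "coord_change_top (U I0) (Z I0) (psi I0) (F I0) (U J) (Z J) (psi J) (F J) (UU J I0) (phi J I0)"
        using CC I0Iset JIset J(2) by blast
      have o: "openin (U I0) (UU J I0)" using cc unfolding coord_change_top_def by (elim conjE)
      have e: "embedding_map (subtopology (U I0) (UU J I0)) (U J) (phi J I0)"
        using cc unfolding coord_change_top_def by (elim conjE)
      have "openin (subtopology (U I0) (UU J I0)) {x \<in> topspace (subtopology (U I0) (UU J I0)). phi J I0 x \<in> {y. (J,y) \<in> A}}"
        using openin_continuous_map_preimage[OF emb_cont[OF e]] AO(2) J(1) by blast
      then show ?thesis using openin_trans_full o by blast
    qed
    then show ?thesis unfolding eqs by (intro openin_Union) auto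
  qed
  have main: "openin (quotient_topology (sum_topology U (set (drop k Is))) (?R \<inter> (topspace (sum_topology U (set (drop k Is))) \<times> topspace (sum_topology U (set (drop k Is))))))
     ((\<lambda>c. (?R \<inter> (topspace (sum_topology U (set (drop k Is))) \<times> topspace (sum_topology U (set (drop k Is))))) `` c) ` topspace (quotient_topology (sum_topology U (set (drop (Suc k) Is))) (?R \<inter> (topspace (sum_topology U (set (drop (Suc k) Is))) \<times> topspace (sum_topology U (set (drop (Suc k) Is)))))))
     \<and> embedding_map (quotient_topology (sum_topology U (set (drop (Suc k) Is))) (?R \<inter> (topspace (sum_topology U (set (drop (Suc k) Is))) \<times> topspace (sum_topology U (set (drop (Suc k) Is))))))
        (quotient_topology (sum_topology U (set (drop k Is))) (?R \<inter> (topspace (sum_topology U (set (drop k Is))) \<times> topspace (sum_topology U (set (drop k Is))))))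
        (\<lambda>c. (?R \<inter> (topspace (sum_topology U (set (drop k Is))) \<times> topspace (sum_topology U (set (drop k Is))))) `` c)"
  proof (rule core[OF assms(4), where Ka = "set (drop (Suc k) Is)" and Io = I0])
    show "Sigma (set (drop k Is)) (topspace \<circ> U) \<subseteq> Sigma Iset (topspace \<circ> U)"
      using assms(6) by (metis Sigma_mono set_drop_subset subset_refl)
    show "set (drop k Is) = insert I0 (set (drop (Suc k) Is))" using dropk by simp
  qed (use H in auto)
  show ?thesis using main unfolding tail_quotient_def tail_natural_map_def Let_def by simp
qed

end
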